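(* Let $n\ge1$, $0<\alpha\le 1$, let $\Omega\subset\mathbb{R}^n$ be a bounded domain, and let $f\in C(\Omega)$ be bounded with $f\le0$. Let $u$ be a bounded viscosity supersolution to $\mathcal{L}_\infty u=f$ in $\Omega$. Then for every $x\in\Omega$, $$\mathcal{L}^-_\infty u(x)=\inf_{y\in\mathbb{R}^n}\frac{u(y)-u(x)}{|x-y|^\alpha}=\inf_{y\in\mathbb{R}^n\setminus\Omega}\frac{u(y)-u(x)}{|y-x|^\alpha},$$ i.e. the infimum defining $\mathcal{L}^-_\infty u(x)$ equals the infimum taken only over the complement of $\Omega$.
   Context: For $0<\alpha\le1$ and a function $\varphi:\mathbb{R}^n\to\mathbb{R}$, the nonlocal infinity Laplacian is $\mathcal{L}_\infty\varphi(x)=\mathcal{L}^+_\infty\varphi(x)+\mathcal{L}^-_\infty\varphi(x)$, where $\mathcal{L}^+_\infty\varphi(x)=\sup_{y\in\mathbb{R}^n}\frac{\varphi(y)-\varphi(x)}{|x-y|^\alpha}$ and $\mathcal{L}^-_\infty\varphi(x)=\inf_{y\in\mathbb{R}^n}\frac{\varphi(y)-\varphi(x)}{|x-y|^\alpha}$ (with $y\neq x$). Viscosity supersolution: a lower semicontinuous $u:\mathbb{R}^n\to\mathbb{R}$ with $|u(x)|\le C(1+|x|)^\beta$ for some $C>0$, $\beta<\alpha$, is a viscosity supersolution to $\mathcal{L}_\infty u=f$ in $\Omega$ if for every $x_0\in\Omega$ and every locally Lipschitz continuous $\varphi:\mathbb{R}^n\to\mathbb{R}$ with $|\varphi(x)|\le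 C(1+|x|)^\beta$ for some $C>0$, $\beta<\alpha$, such that $\varphi(x_0)=u(x_0)$ and $u\ge\varphi$ on $\mathbb{R}^n$, one has $\mathcal{L}_\infty\varphi(x_0)\le f(x_0)$. *)

theory Defs
  imports "HOL-Analysis.Analysis"
begin

definition lsc :: "('a::topological_space \<Rightarrow> real) \<Rightarrow> bool" where
  "lsc u \<longleftrightarrow> (\<forall>x. \<forall>t. t < u x \<longrightarrow> eventually (\<lambda>y. t < u y) (at x))"

definition loc_lipschitz :: "('a::metric_space \<Rightarrow> real) \<Rightarrow> bool" where
  "loc_lipschitz \<phi> \<longleftrightarrow> (\<forall>x. \<exists>r>0. \<exists>L. L-lipschitz_on (ball x r) \<phi>)"

definition growth_ok :: "real \<Rightarrow> ('a::real_normed_vector \<Rightarrow> real) \<Rightarrow> bool" where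
  "growth_ok \<alpha> v \<longleftrightarrow> (\<exists>C>0. \<exists>\<beta><\<alpha>. \<forall>x. \<bar>v x\<bar> \<le> C * (1 + norm x) powr \<beta>)"

definition Lplus :: "real \<Rightarrow> ('a::real_normed_vector \<Rightarrow> real) \<Rightarrow> 'a \<Rightarrow> ereal" where
  "Lplus \<alpha> \<phi> x = (SUP y\<in>UNIV - {x}. ereal ((\<phi> y - \<phi> x) / norm (x - y) powr \<alpha>))"

definition Lminus :: "real \<Rightarrow> ('a::real_normed_vector \<Rightarrow> real) \<Rightarrow> 'a \<Rightarrow> ereal" where
  "Lminus \<alpha> \<phi> x = (INF y\<in>UNIV - {x}. ereal ((\<phi> y - \<phi> x) / norm (x - y) powr \<alpha>))"

definition Linf :: "real \<Rightarrow> ('a::real_normed_vector \<Rightarrow> real) \<Rightarrow> 'a \<Rightarrow> ereal" where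
  "Linf \<alpha> \<phi> x = Lplus \<alpha> \<phi> x + Lminus \<alpha> \<phi> x"

definition visc_super ::
  "real \<Rightarrow> 'a::real_normed_vector set \<Rightarrow> ('a \<Rightarrow> real) \<Rightarrow> ('a \<Rightarrow> real) \<Rightarrow> bool" where
  "visc_super \<alpha> \<Omega> f u \<longleftrightarrow> lsc u \<and> growth_ok \<alpha> u \<and>
     (\<forall>x0\<in>\<Omega>. \<forall>\<phi>. loc_lipschitz \<phi> \<and> growth_ok \<alpha> \<phi> \<and> \<phi> x0 = u x0 \<and> (\<forall>x. \<phi> x \<le> u x)
        \<longrightarrow> Linf \<alpha> \<phi> x0 \<le> ereal (f x0))"

end

theory Submission
  imports Defs
begin

lemma lip_max:
  fixes f g :: "'a::metric_space \<Rightarrow> real"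
  assumes "L-lipschitz_on S f" "L-lipschitz_on S g"
  shows "L-lipschitz_on S (\<lambda>x. max (f x) (g x))"
proof (rule lipschitz_onI)
  show "0 \<le> L" using assms(1) lipschitz_on_nonneg by blast
  fix x y assume xy: "x \<in> S" "y \<in> S"
  have 1: "\<bar>f x - f y\<bar> \<le> L * dist x y" using assms(1) xy lipschitz_onD dist_real_def by metis
  have 2: "\<bar>g x - g y\<bar> \<le> L * dist x y" using assms(2) xy lipschitz_onD dist_real_def by metis
  show "dist (max (f x) (g x)) (max (f y) (g y)) \<le> L * dist x y"
    using 1 2 unfolding dist_real_def by (auto simp: max_def abs_if split: if_splits)
qed

lemma powr_subadd:
  fixes a b \<alpha> :: real
  assumes "0 \<le> a" "0 \<le> b" "0 < \<alpha>" "\<alpha> \<le> 1"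
  shows "(a+b) powr \<alpha> \<le> a powr \<alpha> + b powr \<alpha>"
proof (cases "a + b = 0")
  case True then show ?thesis using assms by simp
next
  case False
  then have s: "a + b > 0" using assms by simp
  have t1: "x \<le> x powr \<alpha>" if "0 \<le> x" "x \<le> 1" for x :: real
    by (metis assms(3,4) powr_mono' powr_one that)
  have ha: "a/(a+b) \<le> (a/(a+b)) powr \<alpha>" using t1 s assms by simp
  have hb: "b/(a+b) \<le> (b/(a+b)) powr \<alpha>" using t1 s assms by simp
  have "1 = a/(a+b) + b/(a+b)" using s by (simp add: add_divide_distrib[symmetric])
  also have "\<dots> \<le> (a/(a+b)) powr \<alpha> + (b/(a+b)) powr \<alpha>" using ha hb by simp
  also have "\<dots> = (a powr \<alpha> + b powr \<alpha>) / (a+b) powr \<alpha>"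
    using assms s by (simp add: powr_divide add_divide_distrib)
  finally show ?thesis using s by (simp add: le_divide_eq)
qed

lemma powr_lip:
  fixes a b c \<alpha> :: real
  assumes "0 < c" "c \<le> a" "c \<le> b" "0 < \<alpha>" "\<alpha> \<le> 1"
  shows "\<bar>a powr \<alpha> - b powr \<alpha>\<bar> \<le> \<alpha> * c powr (\<alpha> - 1) * \<bar>a - b\<bar>"
proof -
  have main: "y powr \<alpha> - x powr \<alpha> \<le> \<alpha> * c powr (\<alpha> - 1) * (y - x)"
    if "c \<le> x" "x < y" for x y
  proof -
    have der: "((\<lambda>t. t powr \<alpha>) has_real_derivative \<alpha> * t powr (\<alpha> - 1)) (at t)"
      if "x \<le> t" "t \<le> y" for t
      using has_real_derivative_powr[of t \<alpha>] that \<open>c \<le> x\<close> assms(1) by simp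
    obtain \<xi> where \<xi>: "x < \<xi>" "\<xi> < y" "y powr \<alpha> - x powr \<alpha> = (y - x) * (\<alpha> * \<xi> powr (\<alpha> - 1))"
      using MVT2[OF \<open>x < y\<close> der] by blast
    have "\<xi> powr (\<alpha> - 1) \<le> c powr (\<alpha> - 1)"
      using powr_mono2'[of "\<alpha> - 1" c \<xi>] assms \<xi> that by auto
    then have "(y - x) * (\<alpha> * \<xi> powr (\<alpha> - 1)) \<le> (y - x) * (\<alpha> * c powr (\<alpha> - 1))"
      using that assms by (intro mult_left_mono) auto
    then show ?thesis using \<xi> by (simp add: mult.commute mult.left_commute)
  qed
  show ?thesis
  proof (cases a b rule: linorder_cases)
    case less
    moreover have "a powr \<alpha> \<le> b powr \<alpha>" using less assms by (intro powr_mono2) auto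
    ultimately show ?thesis using main[of a b] assms by (simp add: abs_if algebra_simps)
  next
    case equal then show ?thesis by simp
  next
    case greater
    moreover have "b powr \<alpha> \<le> a powr \<alpha>" using greater assms by (intro powr_mono2) auto
    ultimately show ?thesis using main[of b a] assms by (simp add: abs_if algebra_simps)
  qed
qed

lemma lsc_minus_cont:
  fixes u h :: "'a::metric_space \<Rightarrow> real"
  assumes "lsc u" "continuous_on UNIV h"
  shows "lsc (\<lambda>y. u y - h y)"
  unfolding lsc_def
proof (intro allI impI)
  fix x t assume t: "t < u x - h x"
  define e where "e = (u x - h x - t) / 2"
  have te: "2 * e = u x - h x - t" unfolding e_def by simp
  have e: "e > 0" using t te by linarith
  have "u x - e < u x" using e by linarith
  then have ev1: "eventually (\<lambda>y. u x - e < u y) (at x)"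
    using assms(1) unfolding lsc_def by blast
  have "isCont h x" using assms(2) by (simp add: continuous_on_eq_continuous_at)
  then have "(h \<longlongrightarrow> h x) (at x)" by (simp add: isCont_def)
  then have ev2: "eventually (\<lambda>y. dist (h y) (h x) < e) (at x)" using e by (rule tendstoD)
  show "eventually (\<lambda>y. t < u y - h y) (at x)"
  proof (rule eventually_mono[OF eventually_conj[OF ev1 ev2]])
    fix y assume a: "u x - e < u y \<and> dist (h y) (h x) < e"
    then have "\<bar>h y - h x\<bar> < e" by (simp add: dist_real_def)
    then have "h y - h x < e" by (simp add: abs_less_iff)
    then show "t < u y - h y" using a te by linarith
  qed
qed

lemma lsc_min:
  fixes g :: "'a::metric_space \<Rightarrow> real"
  assumes "compact K" "K \<noteq> {}" "lsc g"
  shows "\<exists>z\<in>K. \<forall>w\<in>K. g z \<le> g w"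
proof (rule ccontr)
  assume "\<not> ?thesis"
  then have "\<forall>z\<in>K. \<exists>w\<in>K. g w < g z" by (auto simp: not_le)
  then obtain W where W: "\<forall>z\<in>K. W z \<in> K \<and> g (W z) < g z" by metis
  have "\<forall>z\<in>K. \<exists>S. open S \<and> z \<in> S \<and> (\<forall>y\<in>S. g (W z) < g y)"
  proof
    fix z assume z: "z \<in> K"
    have "eventually (\<lambda>y. g (W z) < g y) (at z)" using assms(3) W z unfolding lsc_def by blast
    then obtain S where S: "open S" "z \<in> S" "\<forall>y\<in>S. y \<noteq> z \<longrightarrow> g (W z) < g y"
      unfolding eventually_at_topological by auto
    then show "\<exists>S. open S \<and> z \<in> S \<and> (\<forall>y\<in>S. g (W z) < g y)"
      using W z by (intro exI[of _ S]) auto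
  qed
  then obtain Op where Op: "\<forall>z\<in>K. open (Op z) \<and> z \<in> Op z \<and> (\<forall>y\<in>Op z. g (W z) < g y)" by metis
  have cov: "K \<subseteq> (\<Union>c\<in>K. Op c)" using Op by auto
  obtain C where C: "C \<subseteq> K" "finite C" "K \<subseteq> (\<Union>c\<in>C. Op c)"
    using compactE_image[OF assms(1), where C=K and f=Op] Op cov by blast
  have "C \<noteq> {}" using C assms(2) by auto
  define m where "m = Min ((\<lambda>c. g (W c)) ` C)"
  have "m \<in> (\<lambda>c. g (W c)) ` C" using C \<open>C \<noteq> {}\<close> m_def by simp
  then obtain c0 where c0: "c0 \<in> C" "m = g (W c0)" by auto
  have "W c0 \<in> K" using W C c0 by auto
  then obtain c where c: "c \<in> C" "W c0 \<in> Op c" using C by auto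
  then have "g (W c) < g (W c0)" using Op C by auto
  moreover have "m \<le> g (W c)" using C c m_def by simp
  ultimately show False using c0 by simp
qed

theorem mainTheorem2:
  fixes \<alpha> :: real and \<Omega> :: "'a::euclidean_space set"
    and f u :: "'a \<Rightarrow> real"
  assumes "0 < \<alpha>" "\<alpha> \<le> 1"
    and "open \<Omega>" "connected \<Omega>" "\<Omega> \<noteq> {}" "bounded \<Omega>"
    and "continuous_on \<Omega> f" "bounded (f ` \<Omega>)" "\<forall>x\<in>\<Omega>. f x \<le> 0"
    and "bounded (range u)"
    and "visc_super \<alpha> \<Omega> f u"
  shows "\<forall>x\<in>\<Omega>. Lminus \<alpha> u x =
           (INF y\<in>UNIV - \<Omega>. ereal ((u y - u x) / norm (y - x) powr \<alpha>))"
proof (intro ballI)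
  fix x assume xO: "x \<in> \<Omega>"
  have vs: "lsc u" "\<forall>x0\<in>\<Omega>. \<forall>\<phi>. loc_lipschitz \<phi> \<and> growth_ok \<alpha> \<phi> \<and> \<phi> x0 = u x0 \<and> (\<forall>x. \<phi> x \<le> u x)
        \<longrightarrow> Linf \<alpha> \<phi> x0 \<le> ereal (f x0)"
    using assms(11) unfolding visc_super_def by auto
  obtain B where B: "\<And>y. \<bar>u y\<bar> \<le> B"
    using assms(10) unfolding bounded_pos by auto
  have B0: "0 \<le> B" using B[of x] by simp
  have Bu: "-B \<le> u w" "u w \<le> B" for w using B[of w] by (auto simp: abs_le_iff)
  define R where "R = (INF y\<in>UNIV - \<Omega>. ereal ((u y - u x) / norm (y - x) powr \<alpha>))"
  have le1: "Lminus \<alpha> u x \<le> R"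
    unfolding Lminus_def R_def
    by (rule INF_superset_mono) (use xO in \<open>auto simp: norm_minus_commute\<close>)
  have R0: "R \<le> 0"
  proof (rule ereal_le_epsilon2)
    fix \<epsilon> :: real assume \<epsilon>: "0 < \<epsilon>"
    obtain b where b: "b > 0" "\<forall>w\<in>\<Omega>. norm w \<le> b" using assms(6) bounded_pos by blast
    obtain e :: 'a where e: "e \<in> Basis" using nonempty_Basis by blast
    define T where "T = max (norm x + b + 1) ((2*B/\<epsilon> + 1) powr (1/\<alpha>))"
    have T1: "T \<ge> norm x + b + 1" by (simp add: T_def)
    have Tpos: "T > 0" using T1 b norm_ge_zero[of x] by linarith
    have "((2*B/\<epsilon> + 1) powr (1/\<alpha>)) powr \<alpha> \<le> T powr \<alpha>"
      using assms(1) by (intro powr_mono2) (auto simp: T_def)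
    moreover have "((2*B/\<epsilon> + 1) powr (1/\<alpha>)) powr \<alpha> = 2*B/\<epsilon> + 1"
      using assms(1) B0 \<epsilon> by (simp add: powr_powr)
    ultimately have TA: "2*B/\<epsilon> + 1 \<le> T powr \<alpha>" by simp
    define y where "y = x + T *\<^sub>R e"
    have ny: "norm (y - x) = T" using e Tpos by (simp add: y_def)
    have "norm (T *\<^sub>R e) \<le> norm y + norm x"
      using norm_triangle_ineq4[of y x] by (simp add: y_def)
    then have "norm y > b" using ny T1 by (simp add: y_def)
    then have yn: "y \<notin> \<Omega>" using b by force
    have "R \<le> ereal ((u y - u x)/norm(y-x) powr \<alpha>)" unfolding R_def
      by (rule INF_lower) (use yn in simp)
    also have "(u y - u x)/norm(y-x) powr \<alpha> \<le> \<epsilon>"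
    proof -
      have Tp: "T powr \<alpha> > 0" using Tpos by simp
      have "\<epsilon> * (2*B/\<epsilon> + 1) = 2*B + \<epsilon>" using \<epsilon> by (simp add: field_simps)
      then have "2*B \<le> \<epsilon> * T powr \<alpha>" using mult_left_mono[OF TA, of \<epsilon>] \<epsilon> by linarith
      moreover have "u y - u x \<le> 2*B" using Bu[of y] Bu[of x] by linarith
      ultimately show ?thesis using Tp ny by (simp add: divide_le_eq mult.commute)
    qed
    finally show "R \<le> 0 + ereal \<epsilon>" by simp
  qed
  have key: "R \<le> ereal ((u y - u x) / norm (x - y) powr \<alpha>)" if yO: "y \<in> \<Omega>" and yx: "y \<noteq> x" for y
  proof (rule ccontr)
    define s where "s = (u y - u x) / norm (x - y) powr \<alpha>"
    assume "\<not> R \<le> ereal ((u y - u x) / norm (x - y) powr \<alpha>)"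
    then have sR: "ereal s < R" by (simp add: s_def not_le)
    then obtain r where r: "R = ereal r" using R0 by (cases R) auto
    have sr: "s < r" "r \<le> 0" using sR R0 r by auto
    define M where "M = (s + r)/2"
    have M: "s < M" "M < r" "M \<le> 0" using sr by (auto simp: M_def)
    have npos: "norm (w - x) powr \<alpha> > 0" if "w \<noteq> x" for w using that by simp
    have compl: "M * norm (w - x) powr \<alpha> \<le> u w - u x" if "w \<notin> \<Omega>" for w
    proof -
      have "R \<le> ereal ((u w - u x) / norm (w - x) powr \<alpha>)" unfolding R_def
        using that by (intro INF_lower) simp
      then have "M \<le> (u w - u x) / norm (w - x) powr \<alpha>" using r M by simp
      moreover have "w \<noteq> x" using that xO by auto
      ultimately show ?thesis using npos by (simp add: le_divide_eq)
    qed
    define g where "g w = u w - u x - M * norm (w - x) powr \<alpha>" for w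
    have gcompl: "g w \<ge> 0" if "w \<notin> \<Omega>" for w using compl[OF that] by (simp add: g_def)
    have gy: "g y < 0"
    proof -
      have ny: "norm (y - x) powr \<alpha> > 0" using npos[OF yx] .
      have "u y - u x = s * norm (y - x) powr \<alpha>" using ny by (simp add: s_def norm_minus_commute)
      moreover have "s * norm (y - x) powr \<alpha> < M * norm (y - x) powr \<alpha>"
        using M(1) ny by (rule mult_strict_right_mono)
      ultimately show ?thesis by (simp add: g_def)
    qed
    have gx: "g x = 0" using assms(1) by (simp add: g_def)
    have lscg: "lsc g"
    proof -
      have "continuous_on UNIV (\<lambda>w. u x + M * norm (w - x) powr \<alpha>)"
        using assms(1) by (intro continuous_intros continuous_on_powr') auto
      from lsc_minus_cont[OF vs(1) this]
      have "lsc (\<lambda>w. u w - (u x + M * norm (w - x) powr \<alpha>))" .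
      moreover have "(\<lambda>w. u w - (u x + M * norm (w - x) powr \<alpha>)) = g"
        by (auto simp: g_def fun_eq_iff)
      ultimately show ?thesis by simp
    qed
    obtain z where z: "z \<in> closure \<Omega>" "\<forall>w\<in>closure \<Omega>. g z \<le> g w"
      using lsc_min[where K="closure \<Omega>", OF _ _ lscg] assms(5,6) by auto
    have gz: "g z \<le> g y" using z yO closure_subset by auto
    have zmin: "g z \<le> g w" for w
    proof (cases "w \<in> closure \<Omega>")
      case True then show ?thesis using z by auto
    next
      case False then have "w \<notin> \<Omega>" using closure_subset by auto
      then show ?thesis using gcompl[of w] gz gy by linarith
    qed
    have zO: "z \<in> \<Omega>" using gcompl[of z] gz gy by (cases "z \<in> \<Omega>") auto
    have zx: "z \<noteq> x" using gx gz gy by auto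
    define \<delta> where "\<delta> = - g z"
    have \<delta>: "\<delta> > 0" using gz gy \<delta>_def by simp
    obtain \<rho> where \<rho>: "\<rho> > 0" "\<forall>w. w \<noteq> x \<and> dist w x < \<rho> \<longrightarrow> u x - \<delta>/2 < u w"
    proof -
      have "eventually (\<lambda>w. u x - \<delta>/2 < u w) (at x)" using vs(1) \<delta> unfolding lsc_def by simp
      then show ?thesis using that unfolding eventually_at by auto
    qed
    define K where "K = (\<bar>u x\<bar> + B + 1) / \<rho>"
    have K: "K > 0" using \<rho> B0 by (simp add: K_def)
    define h where "h w = u x - \<delta>/2 - K * norm (w - x)" for w
    define \<psi> where "\<psi> w = u x + M * norm (w - x) powr \<alpha> - \<delta>" for w
    define \<phi> where "\<phi> w = max (max (\<psi> w) (h w)) (-B)" for w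
    have hu: "h w \<le> u w" for w
    proof (cases "w \<noteq> x \<and> dist w x < \<rho>")
      case True
      have "K * norm (w - x) \<ge> 0" using K by simp
      moreover have "u x - \<delta>/2 < u w" using mp[OF spec[OF \<rho>(2), of w] True] .
      ultimately show ?thesis by (simp add: h_def)
    next
      case False
      show ?thesis
      proof (cases "w = x")
        case True then show ?thesis using \<delta> by (simp add: h_def)
      next
        case wx: False
        then have "norm (w - x) \<ge> \<rho>" using False by (auto simp: dist_norm)
        then have "K * norm (w - x) \<ge> K * \<rho>" using K by simp
        also have "K * \<rho> = \<bar>u x\<bar> + B + 1" using \<rho> by (simp add: K_def)
        finally have "K * norm (w - x) \<ge> \<bar>u x\<bar> + B + 1" .
        moreover have "u x \<le> \<bar>u x\<bar>" by simp
        ultimately show ?thesis using Bu[of w] \<delta> by (simp add: h_def)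
      qed
    qed
    have \<psi>u: "\<psi> w \<le> u w" for w using zmin[of w] by (simp add: \<psi>_def g_def \<delta>_def)
    have \<psi>z: "\<psi> z = u z" by (simp add: \<psi>_def g_def \<delta>_def)
    have \<phi>u: "\<phi> w \<le> u w" for w using hu[of w] \<psi>u[of w] Bu[of w] by (simp add: \<phi>_def)
    have "\<psi> z \<le> \<phi> z" by (simp add: \<phi>_def)
    then have \<phi>z: "\<phi> z = u z" using \<phi>u[of z] \<psi>z by simp
    have \<phi>b: "\<bar>\<phi> w\<bar> \<le> B" for w using \<phi>u[of w] Bu[of w] by (simp add: \<phi>_def abs_le_iff)
    have gr: "growth_ok \<alpha> \<phi>"
    proof -
      have p0: "(1 + norm w) powr 0 = 1" for w :: 'a
        by (smt (verit) norm_ge_zero powr_zero_eq_one)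
      have "\<forall>w. \<bar>\<phi> w\<bar> \<le> (B+1) * (1 + norm w) powr 0" 
      proof
        fix w
        show "\<bar>\<phi> w\<bar> \<le> (B+1) * (1 + norm w) powr 0" using \<phi>b[of w] p0[of w] by simp
      qed
      then show ?thesis using B0 assms(1) unfolding growth_ok_def
        by (intro exI[of _ "B+1"] conjI exI[of _ 0]) auto
    qed
    have hlip: "K-lipschitz_on S h" for S
    proof (rule lipschitz_onI)
      show "0 \<le> K" using K by simp
      fix a b
      have "\<bar>norm (a-x) - norm (b-x)\<bar> \<le> dist a b"
        using norm_triangle_ineq3[of "a-x" "b-x"] by (simp add: dist_norm)
      moreover have "h a - h b = K * (norm (b-x) - norm (a-x))" by (simp add: h_def algebra_simps)
      ultimately show "dist (h a) (h b) \<le> K * dist a b" using K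
        by (simp add: dist_real_def abs_mult abs_minus_commute mult_left_mono)
    qed
    have constlip: "L-lipschitz_on S (\<lambda>w. -B)" if "L \<ge> 0" for L and S :: "'a set"
      by (rule lipschitz_on_mono[OF lipschitz_on_constant]) (use that in auto)
    have loc: "loc_lipschitz \<phi>"
      unfolding loc_lipschitz_def
    proof
      fix p
      show "\<exists>r>0. \<exists>L. L-lipschitz_on (ball p r) \<phi>"
      proof (cases "p = x")
        case True
        have eq: "\<phi> w = max (h w) (-B)" if "w \<in> ball x (\<delta>/(2*K))" for w
        proof -
          have "norm (w - x) < \<delta>/(2*K)" using that by (simp add: dist_norm norm_minus_commute)
          then have "K * norm (w-x) \<le> \<delta>/2" using K by (simp add: field_simps)
          then have "h w \<ge> u x - \<delta>" by (simp add: h_def)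
          moreover have "\<psi> w \<le> u x - \<delta>" using M(3) by (simp add: \<psi>_def mult_nonpos_nonneg)
          ultimately show ?thesis by (simp add: \<phi>_def)
        qed
        have "K-lipschitz_on (ball x (\<delta>/(2*K))) (\<lambda>w. max (h w) (-B))"
          by (intro lip_max hlip constlip) (use K in auto)
        then have "K-lipschitz_on (ball x (\<delta>/(2*K))) \<phi>"
          by (simp add: lipschitz_on_def eq)
        then show ?thesis using True \<delta> K by (intro exI[of _ "\<delta>/(2*K)"] conjI exI[of _ K]) auto
      next
        case False
        define c where "c = norm (p - x) / 2"
        have c: "c > 0" using False by (simp add: c_def)
        have far: "norm (w - x) \<ge> c" if "w \<in> ball p c" for w
        proof -
          have "norm (p - x) \<le> norm (w - x) + norm (p - w)"
            using norm_triangle_ineq[of "w - x" "p - w"] by simp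
          moreover have "norm (p - w) < c" using that by (simp add: dist_norm)
          ultimately show ?thesis by (simp add: c_def)
        qed
        define L1 where "L1 = \<bar>M\<bar> * (\<alpha> * c powr (\<alpha> - 1))"
        have \<psi>lip: "L1-lipschitz_on (ball p c) \<psi>"
        proof (rule lipschitz_onI)
          show "0 \<le> L1" using assms(1) c by (simp add: L1_def)
          fix a b assume ab: "a \<in> ball p c" "b \<in> ball p c"
          have "\<bar>norm (a-x) powr \<alpha> - norm (b-x) powr \<alpha>\<bar> \<le> \<alpha> * c powr (\<alpha> - 1) * \<bar>norm (a-x) - norm (b-x)\<bar>"
            using powr_lip[OF c far[OF ab(1)] far[OF ab(2)] assms(1,2)] .
          also have "\<dots> \<le> \<alpha> * c powr (\<alpha> - 1) * dist a b"
            using norm_triangle_ineq3[of "a-x" "b-x"] assms(1)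
            by (intro mult_left_mono) (auto simp: dist_norm)
          finally have *: "\<bar>norm (a-x) powr \<alpha> - norm (b-x) powr \<alpha>\<bar> \<le> \<alpha> * c powr (\<alpha> - 1) * dist a b" .
          have "\<psi> a - \<psi> b = M * (norm (a-x) powr \<alpha> - norm (b-x) powr \<alpha>)"
            by (simp add: \<psi>_def algebra_simps)
          then have "dist (\<psi> a) (\<psi> b) = \<bar>M\<bar> * \<bar>norm (a-x) powr \<alpha> - norm (b-x) powr \<alpha>\<bar>"
            by (simp add: dist_real_def abs_mult)
          also have "\<dots> \<le> \<bar>M\<bar> * (\<alpha> * c powr (\<alpha> - 1) * dist a b)"
            using * by (intro mult_left_mono) auto
          finally show "dist (\<psi> a) (\<psi> b) \<le> L1 * dist a b" by (simp add: L1_def mult.assoc)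
        qed
        define L where "L = max L1 K"
        have a1: "L-lipschitz_on (ball p c) \<psi>"
          by (rule lipschitz_on_mono[OF \<psi>lip]) (auto simp: L_def)
        have a2: "L-lipschitz_on (ball p c) h"
          by (rule lipschitz_on_mono[OF hlip]) (auto simp: L_def)
        have a3: "L-lipschitz_on (ball p c) (\<lambda>w. -B)"
          using constlip K by (simp add: L_def)
        have "L-lipschitz_on (ball p c) \<phi>"
          unfolding \<phi>_def by (intro lip_max a1 a2 a3)
        then show ?thesis using c by blast
      qed
    qed
    have test: "Linf \<alpha> \<phi> z \<le> ereal (f z)" using vs(2) zO loc gr \<phi>z \<phi>u by blast
    define n where "n = norm (z - x) powr \<alpha>"
    have n: "n > 0" using zx by (simp add: n_def)
    have hx: "u x - \<delta>/2 \<le> \<phi> x" by (simp add: \<phi>_def h_def)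
    have uz: "u z = u x + M * n - \<delta>" using \<psi>z by (simp add: \<psi>_def n_def)
    have p1: "ereal (\<delta>/(2*n) - M) \<le> Lplus \<alpha> \<phi> z"
    proof -
      have "\<delta>/2 - M*n \<le> \<phi> x - \<phi> z" using hx uz \<phi>z by simp
      then have "(\<delta>/2 - M*n)/n \<le> (\<phi> x - \<phi> z)/n" using n by (simp add: divide_right_mono)
      moreover have "(\<delta>/2 - M*n)/n = \<delta>/(2*n) - M" using n by (simp add: field_simps)
      ultimately have "\<delta>/(2*n) - M \<le> (\<phi> x - \<phi> z) / norm (z - x) powr \<alpha>" by (simp add: n_def)
      also have "ereal \<dots> \<le> Lplus \<alpha> \<phi> z" unfolding Lplus_def
        by (rule SUP_upper) (use zx in auto)
      finally show ?thesis by simp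
    qed
    have p2: "ereal M \<le> Lminus \<alpha> \<phi> z"
      unfolding Lminus_def
    proof (rule INF_greatest)
      fix w assume "w \<in> UNIV - {z}"
      then have wz: "w \<noteq> z" by auto
      have nw: "norm (z - w) powr \<alpha> > 0" using wz by simp
      have tri: "norm (w - x) powr \<alpha> \<le> norm (z - x) powr \<alpha> + norm (z - w) powr \<alpha>"
      proof -
        have "norm (w - x) \<le> norm (z - x) + norm (w - z)"
          using norm_triangle_ineq[of "z - x" "w - z"] by simp
        then have "norm (w - x) \<le> norm (z - x) + norm (z - w)" by (simp add: norm_minus_commute)
        then have "norm (w - x) powr \<alpha> \<le> (norm (z - x) + norm (z - w)) powr \<alpha>"
          using assms(1) by (intro powr_mono2) auto
        also have "\<dots> \<le> norm (z - x) powr \<alpha> + norm (z - w) powr \<alpha>"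
          by (rule powr_subadd) (use assms(1,2) in auto)
        finally show ?thesis .
      qed
      have "\<psi> w - \<psi> z \<le> \<phi> w - \<phi> z" using \<phi>z \<psi>z by (simp add: \<phi>_def)
      moreover have "\<psi> w - \<psi> z = M * (norm (w - x) powr \<alpha> - norm (z - x) powr \<alpha>)"
        by (simp add: \<psi>_def algebra_simps)
      moreover have "M * norm (z - w) powr \<alpha> \<le> M * (norm (w - x) powr \<alpha> - norm (z - x) powr \<alpha>)"
        using tri M(3) by (intro mult_left_mono_neg) auto
      ultimately have "M * norm (z - w) powr \<alpha> \<le> \<phi> w - \<phi> z" by linarith
      then show "ereal M \<le> ereal ((\<phi> w - \<phi> z) / norm (z - w) powr \<alpha>)"
        using nw by (simp add: le_divide_eq)
    qed
    have "ereal (\<delta>/(2*n)) \<le> Linf \<alpha> \<phi> z"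
    proof -
      have "ereal (\<delta>/(2*n)) = ereal (\<delta>/(2*n) - M) + ereal M" by simp
      also have "\<dots> \<le> Lplus \<alpha> \<phi> z + Lminus \<alpha> \<phi> z" by (rule add_mono[OF p1 p2])
      finally show ?thesis by (simp add: Linf_def)
    qed
    with test have "\<delta>/(2*n) \<le> f z" by (metis order_trans ereal_less_eq(3))
    moreover have "f z \<le> 0" using assms(9) zO by auto
    moreover have "\<delta>/(2*n) > 0" using \<delta> n by simp
    ultimately show False by linarith
  qed
  have "R \<le> Lminus \<alpha> u x"
    unfolding Lminus_def
  proof (rule INF_greatest)
    fix y assume y: "y \<in> UNIV - {x}"
    show "R \<le> ereal ((u y - u x) / norm (x - y) powr \<alpha>)"
    proof (cases "y \<in> \<Omega>")
      case True then show ?thesis using key y by auto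
    next
      case False then show ?thesis unfolding R_def
        by (intro INF_lower2[of y]) (auto simp: norm_minus_commute)
    qed
  qed
  then have "Lminus \<alpha> u x = R" using le1 by (rule antisym[rotated])
  then show "Lminus \<alpha> u x = (INF y\<in>UNIV - \<Omega>. ereal ((u y - u x) / norm (y - x) powr \<alpha>))"
    by (simp add: R_def)
qed

end
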